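(* Let $\delta\ge 2$ and $n\ge 8\delta$ be integers. Then $\lambda_1\big(D(K_\delta\vee(K_{n-2\delta}+\delta K_1))\big)>n+\delta$, and for every integer $s$ with $\delta+1\le s\le \frac{n-1}{2}$, $$\lambda_1\big(D(K_\delta\vee(K_{n-2\delta}+\delta K_1))\big)<\lambda_1\big(D(K_s\vee(K_{n-2s}+sK_1))\big).$$
   Context: For a connected graph $G$, $D(G)$ is the distance matrix and $\lambda_1(D(G))$ its largest eigenvalue. $K_m$ is the complete graph, $+$ is disjoint union, $sK_1$ is $s$ isolated vertices, $\vee$ is the join (disjoint union plus all edges between the two parts). *)

theory Defs
  imports "Jordan_Normal_Form.Char_Poly"
begin

text \<open>Simple graphs on vertex set {0..<n}, given by an adjacency predicate.\<close>

definition walk_rel :: "nat \<Rightarrow> (nat \<Rightarrow> nat \<Rightarrow> bool) \<Rightarrow> (nat \<times> nat) set" where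
  "walk_rel n adj = {(u,v). u < n \<and> v < n \<and> adj u v}"

definition graph_dist :: "nat \<Rightarrow> (nat \<Rightarrow> nat \<Rightarrow> bool) \<Rightarrow> nat \<Rightarrow> nat \<Rightarrow> nat" where
  "graph_dist n adj u v = (LEAST k. (u, v) \<in> (walk_rel n adj) ^^ k)"

definition connected_graph :: "nat \<Rightarrow> (nat \<Rightarrow> nat \<Rightarrow> bool) \<Rightarrow> bool" where
  "connected_graph n adj = (\<forall>u<n. \<forall>v<n. \<exists>k. (u, v) \<in> (walk_rel n adj) ^^ k)"

definition dist_matrix :: "nat \<Rightarrow> (nat \<Rightarrow> nat \<Rightarrow> bool) \<Rightarrow> real mat" where
  "dist_matrix n adj = mat n n (\<lambda>(i,j). real (graph_dist n adj i j))"

definition lambda1 :: "real mat \<Rightarrow> real" where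
  "lambda1 A = Max {x. eigenvalue A x}"

text \<open>The graph K_s \<or> (K_{n-2s} + s K_1) on {0..<n}:
  {0..<s} is K_s, {s..<n-s} is K_{n-2s}, {n-s..<n} are the s isolated vertices.\<close>
definition join_graph :: "nat \<Rightarrow> nat \<Rightarrow> nat \<Rightarrow> nat \<Rightarrow> bool" where
  "join_graph n s u v = (u \<noteq> v \<and> u < n \<and> v < n \<and>
     (u < s \<or> v < s \<or> (s \<le> u \<and> u < n - s \<and> s \<le> v \<and> v < n - s)))"

end

theory Submission
  imports Defs
begin

lemma dist_join:
  assumes "0 < s" "i < n" "j < n"
  shows "graph_dist n (join_graph n s) i j =
    (if i = j then 0 else if join_graph n s i j then 1 else 2)"
proof -
  let ?R = "walk_rel n (join_graph n s)"
  have R: "(u,v) \<in> ?R \<longleftrightarrow> u < n \<and> v < n \<and> join_graph n s u v" for u v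
    unfolding walk_rel_def by auto
  have P0: "(u,v) \<in> ?R ^^ 0 \<longleftrightarrow> u = v" for u v by auto
  have P1: "(u,v) \<in> ?R ^^ 1 \<longleftrightarrow> (u,v) \<in> ?R" for u v by auto
  show ?thesis
  proof (cases "i = j")
    case True
    have "(LEAST k. (i, j) \<in> ?R ^^ k) = 0" using True by (intro Least_eq_0) simp
    then show ?thesis using True unfolding graph_dist_def by simp
  next
    case ne: False
    show ?thesis
    proof (cases "join_graph n s i j")
      case True
      have "(LEAST k. (i, j) \<in> ?R ^^ k) = 1"
      proof (intro Least_equality)
        show "(i, j) \<in> ?R ^^ 1" using True assms R by auto
        fix y assume "(i, j) \<in> ?R ^^ y"
        then show "1 \<le> y" using ne by (cases y) auto
      qed
      then show ?thesis using ne True unfolding graph_dist_def by simp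
    next
      case nadj: False
      have "i \<noteq> 0" "j \<noteq> 0" using nadj ne assms unfolding join_graph_def by auto
      have "(i, 0) \<in> ?R" "(0, j) \<in> ?R"
        using \<open>i \<noteq> 0\<close> \<open>j \<noteq> 0\<close> assms R unfolding join_graph_def by auto
      then have in2: "(i, j) \<in> ?R ^^ 2"
        by (auto simp: numeral_2_eq_2 relpow_Suc_I)
      have "(LEAST k. (i, j) \<in> ?R ^^ k) = 2"
      proof (intro Least_equality)
        show "(i, j) \<in> ?R ^^ 2" by (rule in2)
        fix y assume y: "(i, j) \<in> ?R ^^ y"
        show "2 \<le> y"
        proof (rule ccontr)
          assume "\<not> 2 \<le> y"
          then have "y = 0 \<or> y = 1" by auto
          then show False using y ne nadj R by auto
        qed
      qed
      then show ?thesis using ne nadj unfolding graph_dist_def by simp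
    qed
  qed
qed

lemma blocksum:
  assumes "finite A"
  shows "(\<Sum>j\<in>A. if j = i then 0 else c) = (if i \<in> A then real (card A) - 1 else real (card A)) * (c::real)"
proof (cases "i \<in> A")
  case True
  have "(\<Sum>j\<in>A. if j = i then 0 else c) = (if i = i then 0 else c) + (\<Sum>j\<in>A - {i}. if j = i then 0 else c)"
    using sum.remove[OF assms True] by blast
  also have "(\<Sum>j\<in>A - {i}. if j = i then 0 else c) = (\<Sum>j\<in>A - {i}. c)"
    by (rule sum.cong) auto
  also have "\<dots> = real (card A - 1) * c" using True assms by simp
  finally show ?thesis using True assms
    by (simp add: of_nat_diff card_gt_0_iff Suc_leI) (metis One_nat_def card_gt_0_iff empty_iff of_nat_1 of_nat_diff Suc_leI)
next
  case False
  have "(\<Sum>j\<in>A. if j = i then 0 else c) = (\<Sum>j\<in>A. c)"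
    by (rule sum.cong) (use False in auto)
  then show ?thesis using False by simp
qed

lemma three_block_sum:
  fixes a1 a2 a3 :: real
  assumes "s \<le> n - s"
  shows "(\<Sum>j\<in>{0..<n}. (if j = i then 0 else (if j < s then a1 else if j < n - s then a2 else a3))) =
   (if i < s then real s - 1 else real s) * a1
   + (if s \<le> i \<and> i < n - s then real (n - s - s) - 1 else real (n - s - s)) * a2
   + (if n - s \<le> i \<and> i < n then real s - 1 else real s) * a3"
proof -
  let ?g = "\<lambda>j. (if j = i then 0 else (if j < s then a1 else if j < n - s then a2 else a3))"
  have split: "sum ?g {0..<n} = sum ?g {0..<s} + sum ?g {s..<n-s} + sum ?g {n-s..<n}"
    using assms by (simp add: sum.atLeastLessThan_concat)
  have e1: "sum ?g {0..<s} = (\<Sum>j\<in>{0..<s}. if j = i then 0 else a1)"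
    by (rule sum.cong) auto
  have e2: "sum ?g {s..<n-s} = (\<Sum>j\<in>{s..<n-s}. if j = i then 0 else a2)"
    by (rule sum.cong) auto
  have e3: "sum ?g {n-s..<n} = (\<Sum>j\<in>{n-s..<n}. if j = i then 0 else a3)"
    by (rule sum.cong) (use assms in auto)
  have c3: "card {n-s..<n} = s" using assms by simp
  show ?thesis unfolding split e1 e2 e3 blocksum[OF finite_atLeastLessThan] c3
    by simp
qed

definition fp :: "real \<Rightarrow> real \<Rightarrow> real \<Rightarrow> real" where
  "fp n s x = x^3 - (n+s-4)*x^2 + (-2*n*s - 3*n + 5*s^2 - s + 5)*x + n*s^2 - 2*n*s - 2*n - 2*s^3 + 5*s^2 + 2"

definition e1 :: "real \<Rightarrow> real \<Rightarrow> real \<Rightarrow> real" where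
  "e1 n s x = s*(x + (n - 2*s) + 1)"
definition e2 :: "real \<Rightarrow> real \<Rightarrow> real \<Rightarrow> real" where
  "e2 n s x = s*(2*x - s + 2)"
definition e3 :: "real \<Rightarrow> real \<Rightarrow> real \<Rightarrow> real" where
  "e3 n s x = (x - s + 1)*(x - (n - 2*s) + 1) - (n - 2*s)*s"

definition evv :: "nat \<Rightarrow> nat \<Rightarrow> real \<Rightarrow> real vec" where
  "evv n s x = vec n (\<lambda>j. if j < s then e1 n s x else if j < n - s then e2 n s x else e3 n s x)"

lemma eq1: "(s - 1) * e1 n s x + (n - 2*s) * e2 n s x + s * e3 n s x = x * e1 n s x"
  unfolding e1_def e2_def e3_def by (simp add: algebra_simps power2_eq_square)
lemma eq2: "s * e1 n s x + (n - 2*s - 1) * e2 n s x + 2 * s * e3 n s x = x * e2 n s x"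
  unfolding e1_def e2_def e3_def by (simp add: algebra_simps power2_eq_square)
lemma eq3: "s * e1 n s x + 2 * (n - 2*s) * e2 n s x + 2 * (s - 1) * e3 n s x = x * e3 n s x - fp n s x"
  unfolding e1_def e2_def e3_def fp_def by (simp add: algebra_simps power2_eq_square power3_eq_cube)

lemma eig:
  assumes s0: "0 < s" and sn: "2*s + 1 \<le> n" and root: "fp (real n) (real s) x = 0"
  shows "dist_matrix n (join_graph n s) *\<^sub>v evv n s x = x \<cdot>\<^sub>v evv n s x"
proof (rule eq_vecI)
  show "dim_vec (dist_matrix n (join_graph n s) *\<^sub>v evv n s x) = dim_vec (x \<cdot>\<^sub>v evv n s x)"
    by (simp add: dist_matrix_def evv_def)
  fix i assume "i < dim_vec (x \<cdot>\<^sub>v evv n s x)"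
  then have i: "i < n" by (simp add: evv_def)
  let ?E1 = "e1 n s x" let ?E2 = "e2 n s x" let ?E3 = "e3 n s x"
  have ssn: "s \<le> n - s" using sn by simp
  have rm: "real (n - s - s) = real n - 2 * real s" using sn by (simp add: of_nat_diff)
  have lhs: "(dist_matrix n (join_graph n s) *\<^sub>v evv n s x) $ i =
     (\<Sum>j\<in>{0..<n}. real (graph_dist n (join_graph n s) i j) * evv n s x $ j)"
    using i by (simp add: dist_matrix_def evv_def scalar_prod_def row_def)
  have rhs: "(x \<cdot>\<^sub>v evv n s x) $ i = x * (if i < s then ?E1 else if i < n - s then ?E2 else ?E3)"
    using i by (simp add: evv_def)
  have tm: "real (graph_dist n (join_graph n s) i j) * evv n s x $ j =
     (if j = i then 0 else (if j < s then ?E1 else if j < n - s then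
        (if i < n - s then 1 else 2) * ?E2 else (if i < s then 1 else 2) * ?E3))" if j: "j \<in> {0..<n}" for j
    using j i s0 dist_join[OF s0 i, of j] by (auto simp: evv_def join_graph_def)
  have "(dist_matrix n (join_graph n s) *\<^sub>v evv n s x) $ i =
     (\<Sum>j\<in>{0..<n}. (if j = i then 0 else (if j < s then ?E1 else if j < n - s then
        (if i < n - s then 1 else 2) * ?E2 else (if i < s then 1 else 2) * ?E3)))"
    unfolding lhs by (rule sum.cong[OF refl tm])
  also have "\<dots> = (if i < s then real s - 1 else real s) * ?E1
   + (if s \<le> i \<and> i < n - s then real (n - s - s) - 1 else real (n - s - s)) * ((if i < n - s then 1 else 2) * ?E2)
   + (if n - s \<le> i \<and> i < n then real s - 1 else real s) * ((if i < s then 1 else 2) * ?E3)"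
    by (rule three_block_sum[OF ssn])
  also have "\<dots> = (x \<cdot>\<^sub>v evv n s x) $ i"
  proof -
    consider "i < s" | "s \<le> i" "i < n - s" | "n - s \<le> i" by linarith
    then show ?thesis
    proof cases
      case 1
      then show ?thesis unfolding rhs rm using eq1[of "real s" "real n" x] ssn i by (simp add: algebra_simps)
    next
      case 2
      then show ?thesis unfolding rhs rm using eq2[of "real s" "real n" x] ssn i s0 by (simp add: algebra_simps)
    next
      case 3
      then show ?thesis unfolding rhs rm using eq3[of "real s" "real n" x] root ssn i s0 by (simp add: algebra_simps)
    qed
  qed
  finally show "(dist_matrix n (join_graph n s) *\<^sub>v evv n s x) $ i = (x \<cdot>\<^sub>v evv n s x) $ i" .
qed

lemma mv_sum:
  assumes "A \<in> carrier_mat n n" "v \<in> carrier_vec n" "i < n"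
  shows "(A *\<^sub>v v) $ i = (\<Sum>j\<in>{0..<n}. A $$ (i, j) * v $ j)"
  using assms by (simp add: scalar_prod_def row_def)

lemma collatz:
  fixes A :: "real mat"
  assumes A: "A \<in> carrier_mat n n" and nn: "\<And>i j. i < n \<Longrightarrow> j < n \<Longrightarrow> A $$ (i,j) \<ge> 0"
    and wpos: "\<And>i. i < n \<Longrightarrow> w $ i > 0" and w: "w \<in> carrier_vec n"
    and Aw: "A *\<^sub>v w = r \<cdot>\<^sub>v w" and ev: "eigenvalue A l"
  shows "l \<le> r"
proof -
  obtain v where v: "v \<in> carrier_vec n" "v \<noteq> 0\<^sub>v n" "A *\<^sub>v v = l \<cdot>\<^sub>v v"
    using ev A unfolding eigenvalue_def eigenvector_def by auto
  obtain k where k: "k < n" "v $ k \<noteq> 0"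
  proof -
    have "\<exists>k<n. v $ k \<noteq> 0"
    proof (rule ccontr)
      assume "\<not> ?thesis"
      then have "v = 0\<^sub>v n" using v(1) by (intro eq_vecI) auto
      with v(2) show False by simp
    qed
    then show ?thesis using that by blast
  qed
  let ?q = "\<lambda>j. \<bar>v $ j\<bar> / w $ j"
  define c where "c = Max (?q ` {0..<n})"
  have fin: "finite (?q ` {0..<n})" and ne: "?q ` {0..<n} \<noteq> {}" using k by auto
  obtain i0 where i0: "i0 < n" "?q i0 = c" using Max_in[OF fin ne] unfolding c_def by auto
  have le: "?q j \<le> c" if "j < n" for j unfolding c_def using that fin by (intro Max_ge) auto
  have cpos: "c > 0"
  proof -
    have "?q k > 0" using k wpos[OF k(1)] by simp
    then show ?thesis using le[OF k(1)] by linarith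
  qed
  have vb: "\<bar>v $ j\<bar> \<le> c * w $ j" if "j < n" for j
    using le[OF that] wpos[OF that] by (simp add: divide_le_eq)
  have vi0: "\<bar>v $ i0\<bar> = c * w $ i0" using i0 wpos[OF i0(1)] by (simp add: divide_eq_eq)
  have "\<bar>l\<bar> * \<bar>v $ i0\<bar> = \<bar>(A *\<^sub>v v) $ i0\<bar>" using v(3) i0 v(1) by (simp add: abs_mult)
  also have "\<dots> = \<bar>\<Sum>j\<in>{0..<n}. A $$ (i0, j) * v $ j\<bar>" using mv_sum[OF A v(1) i0(1)] by simp
  also have "\<dots> \<le> (\<Sum>j\<in>{0..<n}. \<bar>A $$ (i0, j) * v $ j\<bar>)" by (rule sum_abs)
  also have "\<dots> \<le> (\<Sum>j\<in>{0..<n}. A $$ (i0, j) * (c * w $ j))"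
  proof (rule sum_mono)
    fix j assume "j \<in> {0..<n}"
    then have j: "j < n" by simp
    show "\<bar>A $$ (i0, j) * v $ j\<bar> \<le> A $$ (i0, j) * (c * w $ j)"
      using nn[OF i0(1) j] vb[OF j] by (simp add: abs_mult mult_left_mono)
  qed
  also have "\<dots> = c * (\<Sum>j\<in>{0..<n}. A $$ (i0, j) * w $ j)"
    by (simp add: sum_distrib_left algebra_simps)
  also have "\<dots> = c * (r * w $ i0)"
    using mv_sum[OF A w i0(1)] Aw i0 w by simp
  finally have "\<bar>l\<bar> * (c * w $ i0) \<le> r * (c * w $ i0)" unfolding vi0 by (simp add: algebra_simps)
  then have "\<bar>l\<bar> \<le> r" using cpos wpos[OF i0(1)] by (simp add: mult_le_cancel_right)
  then show ?thesis by simp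
qed

lemma fin_eig:
  fixes A :: "real mat"
  assumes A: "A \<in> carrier_mat n n"
  shows "finite {x. eigenvalue A x}"
proof -
  have "char_poly A \<noteq> 0" using degree_monic_char_poly[OF A] by auto
  then have "finite {x. poly (char_poly A) x = 0}" by (rule poly_roots_finite)
  then show ?thesis using eigenvalue_root_char_poly[OF A] by simp
qed

lemma eig_evv:
  assumes s0: "0 < s" and sn: "2*s + 1 \<le> n" and root: "fp (real n) (real s) x = 0" and x0: "x \<ge> 0"
  shows "eigenvalue (dist_matrix n (join_graph n s)) x"
proof -
  have "evv n s x $ 0 = e1 n s x" using s0 sn by (simp add: evv_def)
  moreover have "e1 n s x > 0" using s0 sn x0 unfolding e1_def
    by (intro mult_pos_pos) (auto simp: of_nat_diff)
  ultimately have "evv n s x \<noteq> 0\<^sub>v n" using sn by (auto simp: zero_vec_def)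
  then show ?thesis unfolding eigenvalue_def eigenvector_def using eig[OF s0 sn root]
    by (intro exI[of _ "evv n s x"]) (auto simp: dist_matrix_def evv_def)
qed

lemma fp_root:
  assumes "fp n s a < 0" "fp n s b > 0" "a \<le> b"
  shows "\<exists>x. a < x \<and> x \<le> b \<and> fp n s x = 0"
proof -
  have c: "continuous_on {a..b} (fp n s)" unfolding fp_def[abs_def] by (intro continuous_intros)
  obtain x where x: "a \<le> x" "x \<le> b" "fp n s x = 0" using IVT'[of "fp n s" a 0 b, OF _ _ assms(3) c] assms by auto
  then have "x \<noteq> a" using assms(1) by auto
  then show ?thesis using x by (intro exI[of _ x]) auto
qed

lemma P1:
  fixes n d :: real
  assumes "d \<ge> 2" "n \<ge> 8*d"
  shows "fp n d (n+d) < 0"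
proof -
  define a where "a = n - 8*d"
  define b where "b = d - 2"
  have a: "a \<ge> 0" and b: "b \<ge> 0" using assms by (auto simp: a_def b_def)
  have n: "n = 8*(b+2)+a" and d: "d = b+2" by (auto simp: a_def b_def)
  have "fp n d (n+d) = -(2*a^2*b + 3*a^2 + 28*a*b^2 + 94*a*b + 73*a + 93*b^3 + 470*b^2 + 735*b + 332)"
    unfolding n d fp_def by (simp add: algebra_simps power2_eq_square power3_eq_cube)
  moreover have "0 \<le> 2*a^2*b + 3*a^2 + 28*a*b^2 + 94*a*b + 73*a + 93*b^3 + 470*b^2 + 735*b"
    using a b by (intro add_nonneg_nonneg mult_nonneg_nonneg) auto
  ultimately show ?thesis by linarith
qed

lemma P2:
  fixes n s :: real
  assumes "s \<ge> 1" "n \<ge> 2*s+1"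
  shows "fp n s (2*n) > 0"
proof -
  define c where "c = n - 2*s - 1"
  define b where "b = s - 1"
  have c: "c \<ge> 0" and b: "b \<ge> 0" using assms by (auto simp: c_def b_def)
  have n: "n = 2*(b+1)+1+c" and s: "s = b+1" by (auto simp: c_def b_def)
  have "fp n s (2*n) = 20*b^3 + 27*b^2*c + 124*b^2 + 16*b*c^2 + 122*b*c + 256*b + 4*c^3 + 38*c^2 + 135*c + 176"
    unfolding n s fp_def by (simp add: algebra_simps power2_eq_square power3_eq_cube)
  moreover have "0 \<le> 20*b^3 + 27*b^2*c + 124*b^2 + 16*b*c^2 + 122*b*c + 256*b + 4*c^3 + 38*c^2 + 135*c"
    using c b by (intro add_nonneg_nonneg mult_nonneg_nonneg) auto
  ultimately show ?thesis by linarith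
qed

definition hh :: "real \<Rightarrow> real \<Rightarrow> real \<Rightarrow> real \<Rightarrow> real" where
  "hh n d s x = - (x^2) - (2*n+1)*x + 5*(s+d)*x + n*(s+d) - 2*n - 2*(s^2+s*d+d^2) + 5*(s+d)"

lemma fp_diff: "fp n s x = fp n d x + (s - d) * hh n d s x"
  unfolding fp_def hh_def by (simp add: algebra_simps power2_eq_square power3_eq_cube)

lemma P3:
  fixes n d s x :: real
  assumes "d \<ge> 0" "n \<ge> 8*d" "n \<ge> 2*s+1" "s \<ge> 0" "x \<ge> n + d"
  shows "hh n d s x < 0"
proof -
  define a where "a = n - 8*d"
  define t where "t = n - 1 - 2*s"
  have a: "a \<ge> 0" and t: "t \<ge> 0" using assms by (auto simp: a_def t_def)
  have n: "n = 8*d+a" and s: "s = (n - 1 - t)/2" by (auto simp: a_def t_def)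
  have "hh n d s (n+d) = -(1/2*a^2 + 2*a*t + 9/2*a*d + 5/2*a + 1/2*t^2 + 35/2*t*d + 7/2*t + 2*d^2 + 35/2*d + 3)"
    unfolding s unfolding n hh_def by (simp add: field_simps power2_eq_square)
  moreover have "0 \<le> 1/2*a^2 + 2*a*t + 9/2*a*d + 5/2*a + 1/2*t^2 + 35/2*t*d + 7/2*t + 2*d^2 + 35/2*d"
    using a t assms(1) by (intro add_nonneg_nonneg mult_nonneg_nonneg) auto
  ultimately have H: "hh n d s (n+d) < 0" by linarith
  have "hh n d s x - hh n d s (n+d) = (x - (n+d)) * (-(x+n+d) - (2*n+1) + 5*(s+d))"
    unfolding hh_def by (simp add: algebra_simps power2_eq_square)
  moreover have "(x - (n+d)) * (-(x+n+d) - (2*n+1) + 5*(s+d)) \<le> 0"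
    using assms by (intro mult_nonneg_nonpos) auto
  ultimately show ?thesis using H by linarith
qed

theorem mainTheorem4:
  fixes \<delta> n :: nat
  assumes "\<delta> \<ge> 2" and "n \<ge> 8 * \<delta>"
  shows "lambda1 (dist_matrix n (join_graph n \<delta>)) > real n + real \<delta> \<and>
    (\<forall>s::nat. \<delta> + 1 \<le> s \<and> real s \<le> (real n - 1) / 2 \<longrightarrow>
           lambda1 (dist_matrix n (join_graph n \<delta>)) < lambda1 (dist_matrix n (join_graph n s)))"
proof -
  let ?N = "real n" and ?D = "real \<delta>"
  have D2: "?D \<ge> 2" and ND: "?N \<ge> 8 * ?D" using assms by auto
  have d0: "0 < \<delta>" and dn: "2*\<delta>+1 \<le> n" using assms by auto
  have "fp ?N ?D (?N + ?D) < 0" by (rule P1[OF D2 ND])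
  moreover have "fp ?N ?D (2 * ?N) > 0" using dn d0 by (intro P2) auto
  ultimately obtain \<rho> where rho: "?N + ?D < \<rho>" "\<rho> \<le> 2 * ?N" "fp ?N ?D \<rho> = 0"
    using fp_root[of ?N ?D "?N + ?D" "2 * ?N"] ND D2 by auto
  let ?A = "dist_matrix n (join_graph n \<delta>)"
  have Acar: "?A \<in> carrier_mat n n" by (simp add: dist_matrix_def)
  have evr: "eigenvalue ?A \<rho>" using eig_evv[OF d0 dn rho(3)] rho D2 by auto
  have pos: "evv n \<delta> \<rho> $ i > 0" if i: "i < n" for i
  proof -
    have m0: "?N - 2 * ?D > 0" using ND D2 by linarith
    have "e1 ?N ?D \<rho> > 0" unfolding e1_def using m0 rho D2 by (intro mult_pos_pos) auto
    moreover have "e2 ?N ?D \<rho> > 0" unfolding e2_def using ND rho D2 by (intro mult_pos_pos) auto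
    moreover have "e3 ?N ?D \<rho> > 0"
    proof -
      have "(?N - 2 * ?D) * ?D < (\<rho> - ?D + 1) * (\<rho> - (?N - 2 * ?D) + 1)"
        using m0 rho D2 by (intro mult_strict_mono) auto
      then show ?thesis unfolding e3_def by linarith
    qed
    ultimately show ?thesis using i by (simp add: evv_def)
  qed
  have maxr: "l \<le> \<rho>" if "eigenvalue ?A l" for l
    by (rule collatz[OF Acar _ pos _ eig[OF d0 dn rho(3)] that])
       (auto simp: dist_matrix_def evv_def)
  have fin: "finite {x. eigenvalue ?A x}" by (rule fin_eig[OF Acar])
  have L: "lambda1 ?A = \<rho>" unfolding lambda1_def
    by (rule Max_eqI[OF fin]) (use maxr evr in auto)
  show ?thesis
  proof (intro conjI allI impI)
    show "lambda1 ?A > ?N + ?D" using L rho by simp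
  next
    fix s :: nat assume s: "\<delta> + 1 \<le> s \<and> real s \<le> (real n - 1) / 2"
    have s0: "0 < s" and sn: "2*s+1 \<le> n" using s d0 by auto
    have S1: "real s \<ge> ?D + 1" and S2: "?N \<ge> 2 * real s + 1" using s by auto
    have "hh ?N ?D (real s) \<rho> < 0" using ND D2 S1 S2 rho by (intro P3) auto
    moreover have "real s - ?D > 0" using S1 by simp
    ultimately have "(real s - ?D) * hh ?N ?D (real s) \<rho> < 0" by (simp add: mult_pos_neg)
    then have "fp ?N (real s) \<rho> < 0" using fp_diff[of ?N "real s" \<rho> ?D] rho(3) by simp
    moreover have "fp ?N (real s) (2 * ?N) > 0" using S1 S2 D2 by (intro P2) auto
    ultimately obtain \<mu> where mu: "\<rho> < \<mu>" "\<mu> \<le> 2 * ?N" "fp ?N (real s) \<mu> = 0"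
      using fp_root[of ?N "real s" \<rho> "2 * ?N"] rho by auto
    let ?B = "dist_matrix n (join_graph n s)"
    have Bcar: "?B \<in> carrier_mat n n" by (simp add: dist_matrix_def)
    have "eigenvalue ?B \<mu>" using eig_evv[OF s0 sn mu(3)] mu rho D2 by auto
    then have "\<mu> \<le> lambda1 ?B" unfolding lambda1_def by (intro Max_ge[OF fin_eig[OF Bcar]]) auto
    then show "lambda1 ?A < lambda1 ?B" using L mu by simp
  qed
qed

end
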